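(* Let $0<p<e^{-1}$ and let $\bar Q=(\bar q_{j,k})_{j,k\geq1}$ be the generator on $\mathbb N=\{1,2,\dots\}$ with $\bar q_{j,k}=\binom{j-1}{k-1}p^k(1-p)^{j-k}$ for $1\leq k\leq j-1$, $\bar q_{j,j+1}=(j+1)p$, $\bar q_{j,j}=p^j-(2+j)p$, and $\bar q_{j,k}=0$ otherwise. Then $\bar Q$ is positive recurrent. *)

theory Defs
  imports "HOL-Analysis.Analysis"
begin

(* A generator Q on a countable state space S \<subseteq> nat (q_jk \<ge> 0 for j \<noteq> k,
   q_jj = - q_j \<le> 0).  The (minimal) continuous-time Markov chain it generates is
   the jump chain with transition matrix Pi plus independent exponential holding
   times of mean 1/q_j.  We define the mean return time E_i[T_i] of the minimal chain
   explicitly from this construction as a sum over excursions. *)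

definition jump_prob :: "(nat \<Rightarrow> nat \<Rightarrow> real) \<Rightarrow> nat \<Rightarrow> nat \<Rightarrow> real" where
  "jump_prob Q j k =
     (if Q j j = 0 then (if k = j then 1 else 0)
      else (if k = j then 0 else Q j k / (- Q j j)))"

(* probability that the jump chain started at i visits exactly i, xs_1, ..., xs_m, i *)
definition excursion_prob :: "(nat \<Rightarrow> nat \<Rightarrow> real) \<Rightarrow> nat \<Rightarrow> nat list \<Rightarrow> ennreal" where
  "excursion_prob Q i xs =
     prod_list (map2 (\<lambda>a b. ennreal (jump_prob Q a b)) (i # xs) (xs @ [i]))"

definition excursion_time :: "(nat \<Rightarrow> nat \<Rightarrow> real) \<Rightarrow> nat \<Rightarrow> nat list \<Rightarrow> ennreal" where
  "excursion_time Q i xs = sum_list (map (\<lambda>x. inverse (ennreal (- Q x x))) (i # xs))"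

definition excursions :: "nat set \<Rightarrow> nat \<Rightarrow> nat list set" where
  "excursions S i = {xs. set xs \<subseteq> S - {i}}"

definition return_prob :: "(nat \<Rightarrow> nat \<Rightarrow> real) \<Rightarrow> nat set \<Rightarrow> nat \<Rightarrow> ennreal" where
  "return_prob Q S i = (\<Sum>\<^sub>\<infinity>xs\<in>excursions S i. excursion_prob Q i xs)"

(* E_i[T_i], T_i = first return time to i of the minimal chain (= \<infinity> if the chain
   fails to return with positive probability, e.g. by explosion) *)
definition mean_return_time :: "(nat \<Rightarrow> nat \<Rightarrow> real) \<Rightarrow> nat set \<Rightarrow> nat \<Rightarrow> ennreal" where
  "mean_return_time Q S i =
     (if return_prob Q S i = 1
      then (\<Sum>\<^sub>\<infinity>xs\<in>excursions S i. excursion_prob Q i xs * excursion_time Q i xs)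
      else top)"

definition positive_recurrent_state :: "(nat \<Rightarrow> nat \<Rightarrow> real) \<Rightarrow> nat set \<Rightarrow> nat \<Rightarrow> bool" where
  "positive_recurrent_state Q S i \<longleftrightarrow> mean_return_time Q S i < top"

definition positive_recurrent :: "(nat \<Rightarrow> nat \<Rightarrow> real) \<Rightarrow> nat set \<Rightarrow> bool" where
  "positive_recurrent Q S \<longleftrightarrow> (\<forall>i\<in>S. positive_recurrent_state Q S i)"

definition Qbar :: "real \<Rightarrow> nat \<Rightarrow> nat \<Rightarrow> real" where
  "Qbar p j k =
     (if 1 \<le> j \<and> 1 \<le> k then
        (if k \<le> j - 1 then real ((j - 1) choose (k - 1)) * p ^ k * (1 - p) ^ (j - k)
         else if k = j + 1 then real (j + 1) * p
         else if k = j then p ^ j - (2 + real j) * p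
         else 0)
      else 0)"

end

theory Submission
  imports Defs
begin
lemma sum_lists_decomp:
  assumes "finite X"
  shows "sum f X = (if [] \<in> X then f [] else 0) +
     (\<Sum>y\<in>hd ` (X - {[]}). \<Sum>ys\<in>{ys. y#ys \<in> X}. f (y#ys))"
proof -
  have fin: "finite {ys. y#ys \<in> X}" for y
  proof -
    have "{ys. y#ys \<in> X} \<subseteq> tl ` X" by (force simp: image_iff)
    then show ?thesis using assms finite_subset by blast
  qed
  have "sum f (X - {[]}) = (\<Sum>(y,ys)\<in>(SIGMA y:hd ` (X - {[]}). {ys. y#ys \<in> X}). f (y#ys))"
    by (rule sum.reindex_bij_witness[of _ "\<lambda>(y,ys). y#ys" "\<lambda>xs. (hd xs, tl xs)"])
       (auto simp: image_iff neq_Nil_conv)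
  also have "\<dots> = (\<Sum>y\<in>hd ` (X - {[]}). \<Sum>ys\<in>{ys. y#ys \<in> X}. f (y#ys))"
    by (rule sum.Sigma[symmetric]) (use assms fin in auto)
  finally have 1: "sum f (X - {[]}) = \<dots>" .
  show ?thesis
  proof (cases "[] \<in> X")
    case True
    then show ?thesis using assms 1 by (simp add: sum.remove)
  next
    case False
    then have "X - {[]} = X" by auto
    then show ?thesis using False 1 by simp
  qed
qed


locale chn =
  fixes P :: "nat \<Rightarrow> nat \<Rightarrow> real" and i :: nat
  assumes i1: "1 \<le> i"
  and Pnn: "\<And>x y. 1 \<le> x \<Longrightarrow> 0 \<le> P x y"
  and Pout: "\<And>x y. 1 \<le> x \<Longrightarrow> y \<notin> {1..x+1} \<Longrightarrow> P x y = 0"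
  and Psum: "\<And>x. 1 \<le> x \<Longrightarrow> (\<Sum>y\<in>{1..x+1}. P x y) = 1"
begin

definition "T = {1..} - {i}"
definition "Tl = {xs. set xs \<subseteq> T}"
definition "pr x xs = prod_list (map2 P (x#xs) (xs@[i]))"
definition "tm (c::nat\<Rightarrow>real) x xs = sum_list (map c (x#xs))"

lemma pr_simps[simp]: "pr x [] = P x i" "pr x (y#ys) = P x y * pr y ys"
  by (simp_all add: pr_def)

lemma tm_simps[simp]: "tm c x [] = c x" "tm c x (y#ys) = c x + tm c y ys"
  by (simp_all add: tm_def)

lemma T_ge1: "y \<in> T \<Longrightarrow> 1 \<le> y" by (simp add: T_def)

lemma pr_nn: "1 \<le> x \<Longrightarrow> set xs \<subseteq> T \<Longrightarrow> 0 \<le> pr x xs"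
  by (induction xs arbitrary: x) (auto simp: Pnn T_def)

lemma sumP_le1: assumes "1 \<le> x" "finite Z" shows "(\<Sum>y\<in>Z. P x y) \<le> 1"
proof -
  have "(\<Sum>y\<in>Z. P x y) = (\<Sum>y\<in>Z \<inter> {1..x+1}. P x y)"
    by (rule sum.mono_neutral_right) (use assms Pout in auto)
  also have "\<dots> \<le> (\<Sum>y\<in>{1..x+1}. P x y)"
    by (rule sum_mono2) (use assms Pnn in auto)
  finally show ?thesis using Psum assms by simp
qed

lemma sumP_minus: assumes "1 \<le> x" shows "(\<Sum>y\<in>{1..x+1}-{i}. P x y) = 1 - P x i"
proof (cases "i \<in> {1..x+1}")
  case True
  then show ?thesis using Psum[OF assms] by (simp add: sum_diff1)
next
  case False
  then show ?thesis using Psum[OF assms] Pout[OF assms False] by simp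
qed

lemma mass: "\<forall>x X. 1 \<le> x \<longrightarrow> finite X \<longrightarrow> X \<subseteq> Tl \<longrightarrow> (\<forall>xs\<in>X. length xs \<le> n)
   \<longrightarrow> sum (pr x) X \<le> 1"
proof (induction n)
  case 0
  show ?case
  proof (intro allI impI)
    fix x X assume x: "1 \<le> (x::nat)" and "finite X" "X \<subseteq> Tl" and l: "\<forall>xs\<in>X. length xs \<le> 0"
    then have "X \<subseteq> {[]}" by auto
    then have "sum (pr x) X \<le> sum (pr x) {[]}"
      by (intro sum_mono2) (auto simp: Pnn[OF x])
    also have "\<dots> \<le> 1" using sumP_le1[OF x, of "{i}"] by simp
    finally show "sum (pr x) X \<le> 1" .
  qed
next
  case (Suc n)
  show ?case
  proof (intro allI impI)
    fix x X assume x: "1 \<le> (x::nat)" and X: "finite X" "X \<subseteq> Tl" and l: "\<forall>xs\<in>X. length xs \<le> Suc n"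
    define Y where "Y = hd ` (X - {[]})"
    define Z where "Z y = {ys. y#ys \<in> X}" for y
    have Y1: "finite Y" using X by (simp add: Y_def)
    have Y2: "Y \<subseteq> T"
    proof
      fix y assume "y \<in> Y"
      then obtain xs where "xs \<in> X" "xs \<noteq> []" "y = hd xs" by (auto simp: Y_def)
      then show "y \<in> T" using X(2) hd_in_set by (auto simp: Tl_def)
    qed
    note Y = Y1 Y2
    have Zf: "finite (Z y)" for y
    proof -
      have "Z y \<subseteq> tl ` X" by (force simp: image_iff Z_def)
      then show ?thesis using X finite_subset by blast
    qed
    have ZT: "Z y \<subseteq> Tl" for y
    proof
      fix ys assume "ys \<in> Z y"
      then have "y#ys \<in> X" by (simp add: Z_def)
      then have "set (y#ys) \<subseteq> T" using X(2) unfolding Tl_def by blast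
      then show "ys \<in> Tl" by (simp add: Tl_def)
    qed
    have Zl: "\<forall>xs\<in>Z y. length xs \<le> n" for y using l by (auto simp: Z_def)
    have Zb: "y \<in> Y \<Longrightarrow> sum (pr y) (Z y) \<le> 1" for y
      using Suc.IH Zf[of y] ZT[of y] Zl[of y] Y T_ge1[of y] by blast
    have "sum (pr x) X = (if [] \<in> X then P x i else 0) + (\<Sum>y\<in>Y. \<Sum>ys\<in>Z y. P x y * pr y ys)"
      using sum_lists_decomp[OF X(1), of "pr x"] by (simp add: Y_def Z_def)
    also have "\<dots> \<le> P x i + (\<Sum>y\<in>Y. P x y)"
    proof (intro add_mono sum_mono)
      show "(if [] \<in> X then P x i else 0) \<le> P x i" using Pnn x by auto
      fix y assume "y \<in> Y"
      then have "(\<Sum>ys\<in>Z y. P x y * pr y ys) = P x y * sum (pr y) (Z y)" by (simp add: sum_distrib_left)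
      also have "\<dots> \<le> P x y" using Zb \<open>y\<in>Y\<close> Pnn[OF x, of y] by (simp add: mult_left_le)
      finally show "(\<Sum>ys\<in>Z y. P x y * pr y ys) \<le> P x y" .
    qed
    also have "\<dots> = (\<Sum>y\<in>insert i Y. P x y)"
    proof -
      have "i \<notin> Y" using Y by (auto simp: T_def)
      then show ?thesis using Y by simp
    qed
    also have "\<dots> \<le> 1" using sumP_le1 x Y by simp
    finally show "sum (pr x) X \<le> 1" .
  qed
qed

lemma mass': "1 \<le> x \<Longrightarrow> finite X \<Longrightarrow> X \<subseteq> Tl \<Longrightarrow> sum (pr x) X \<le> 1"
proof -
  assume a: "1 \<le> x" "finite X" "X \<subseteq> Tl"
  have "\<forall>xs\<in>X. length xs \<le> Max (length ` X)" using a by auto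
  then show ?thesis using mass a by blast
qed

lemma time_bound:
  assumes c: "\<And>x. 1 \<le> x \<Longrightarrow> 0 \<le> c x" and V: "\<And>y. y \<in> T \<Longrightarrow> 0 \<le> V y"
    and drift: "\<And>x. 1 \<le> x \<Longrightarrow> c x + (\<Sum>y\<in>{1..x+1}-{i}. P x y * V y) \<le> V x"
  shows "\<forall>x X. 1 \<le> x \<longrightarrow> finite X \<longrightarrow> X \<subseteq> Tl \<longrightarrow> (\<forall>xs\<in>X. length xs \<le> n)
   \<longrightarrow> (\<Sum>xs\<in>X. pr x xs * tm c x xs) \<le> V x"
proof (induction n)
  case 0
  show ?case
  proof (intro allI impI)
    fix x X assume x: "1 \<le> (x::nat)" and "finite X" "X \<subseteq> Tl" and l: "\<forall>xs\<in>X. length xs \<le> 0"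
    then have "X \<subseteq> {[]}" by auto
    then have "(\<Sum>xs\<in>X. pr x xs * tm c x xs) \<le> (\<Sum>xs\<in>{[]}. pr x xs * tm c x xs)"
      by (intro sum_mono2) (auto simp: Pnn[OF x] c[OF x])
    also have "\<dots> \<le> c x" using sumP_le1[OF x, of "{i}"] c[OF x] Pnn[OF x]
      by (simp add: mult_left_le_one_le)
    also have "\<dots> \<le> V x"
    proof -
      have "0 \<le> (\<Sum>y\<in>{1..x+1}-{i}. P x y * V y)"
        by (intro sum_nonneg mult_nonneg_nonneg Pnn[OF x] V) (auto simp: T_def)
      then show ?thesis using drift[OF x] by simp
    qed
    finally show "(\<Sum>xs\<in>X. pr x xs * tm c x xs) \<le> V x" .
  qed
next
  case (Suc n)
  show ?case
  proof (intro allI impI)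
    fix x X assume x: "1 \<le> (x::nat)" and X: "finite X" "X \<subseteq> Tl" and l: "\<forall>xs\<in>X. length xs \<le> Suc n"
    define Y where "Y = hd ` (X - {[]})"
    define Z where "Z y = {ys. y#ys \<in> X}" for y
    have Y1: "finite Y" using X by (simp add: Y_def)
    have Y2: "Y \<subseteq> T"
    proof
      fix y assume "y \<in> Y"
      then obtain xs where "xs \<in> X" "xs \<noteq> []" "y = hd xs" by (auto simp: Y_def)
      then show "y \<in> T" using X(2) hd_in_set by (auto simp: Tl_def)
    qed
    note Y = Y1 Y2
    have Zf: "finite (Z y)" for y
    proof -
      have "Z y \<subseteq> tl ` X" by (force simp: image_iff Z_def)
      then show ?thesis using X finite_subset by blast
    qed
    have ZT: "Z y \<subseteq> Tl" for y
    proof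
      fix ys assume "ys \<in> Z y"
      then have "y#ys \<in> X" by (simp add: Z_def)
      then have "set (y#ys) \<subseteq> T" using X(2) unfolding Tl_def by blast
      then show "ys \<in> Tl" by (simp add: Tl_def)
    qed
    have Zl: "\<forall>xs\<in>Z y. length xs \<le> n" for y using l by (auto simp: Z_def)
    have Zb: "y \<in> Y \<Longrightarrow> sum (pr y) (Z y) \<le> 1" for y
      using mass' Zf[of y] ZT Y T_ge1[of y] by auto
    have Zt: "y \<in> Y \<Longrightarrow> (\<Sum>ys\<in>Z y. pr y ys * tm c y ys) \<le> V y" for y
      using Suc.IH Zf[of y] ZT[of y] Zl[of y] Y T_ge1[of y] by blast
    have "(\<Sum>xs\<in>X. pr x xs * tm c x xs) = (if [] \<in> X then P x i * c x else 0) + 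
        (\<Sum>y\<in>Y. \<Sum>ys\<in>Z y. P x y * (c x * pr y ys + pr y ys * tm c y ys))"
      using sum_lists_decomp[OF X(1), of "\<lambda>xs. pr x xs * tm c x xs"] 
      by (simp add: Y_def Z_def algebra_simps)
    also have "\<dots> \<le> c x * P x i + (\<Sum>y\<in>Y. P x y * (c x + V y))"
    proof (intro add_mono sum_mono)
      show "(if [] \<in> X then P x i * c x else 0) \<le> c x * P x i" using Pnn[OF x] c[OF x] by auto
      fix y assume y: "y \<in> Y"
      then have "(\<Sum>ys\<in>Z y. P x y * (c x * pr y ys + pr y ys * tm c y ys)) = 
          P x y * (c x * sum (pr y) (Z y) + (\<Sum>ys\<in>Z y. pr y ys * tm c y ys))"
        by (simp add: sum.distrib distrib_left flip: sum_distrib_left)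
      also have "\<dots> \<le> P x y * (c x + V y)" 
        using Zb[OF y] Zt[OF y] Pnn[OF x, of y] c[OF x]
        by (intro mult_left_mono add_mono) (auto simp: mult_left_le)
      finally show "(\<Sum>ys\<in>Z y. P x y * (c x * pr y ys + pr y ys * tm c y ys)) \<le> P x y * (c x + V y)" .
    qed
    also have "\<dots> = c x * (\<Sum>y\<in>insert i Y. P x y) + (\<Sum>y\<in>Y. P x y * V y)"
    proof -
      have "i \<notin> Y" using Y by (auto simp: T_def)
      then show ?thesis using Y by (simp add: algebra_simps sum.distrib sum_distrib_left)
    qed
    also have "\<dots> \<le> c x * 1 + (\<Sum>y\<in>{1..x+1}-{i}. P x y * V y)"
    proof (intro add_mono mult_left_mono)
      show "(\<Sum>y\<in>insert i Y. P x y) \<le> 1" using sumP_le1 x Y by simp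
      show "0 \<le> c x" using c x by simp
      have "(\<Sum>y\<in>Y. P x y * V y) = (\<Sum>y\<in>Y \<inter> {1..x+1}. P x y * V y)"
        by (rule sum.mono_neutral_right) (use Y Pout[OF x] in auto)
      also have "\<dots> \<le> (\<Sum>y\<in>{1..x+1}-{i}. P x y * V y)"
        by (rule sum_mono2) (use Y Pnn[OF x] V in \<open>auto simp: T_def\<close>)
      finally show "(\<Sum>y\<in>Y. P x y * V y) \<le> (\<Sum>y\<in>{1..x+1}-{i}. P x y * V y)" .
    qed
    also have "\<dots> \<le> V x" using drift[OF x] by simp
    finally show "(\<Sum>xs\<in>X. pr x xs * tm c x xs) \<le> V x" .
  qed
qed

lemma time_bound':
  assumes c: "\<And>x. 1 \<le> x \<Longrightarrow> 0 \<le> c x" and V: "\<And>y. y \<in> T \<Longrightarrow> 0 \<le> V y"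
    and drift: "\<And>x. 1 \<le> x \<Longrightarrow> c x + (\<Sum>y\<in>{1..x+1}-{i}. P x y * V y) \<le> V x"
    and "1 \<le> x" "finite X" "X \<subseteq> Tl"
  shows "(\<Sum>xs\<in>X. pr x xs * tm c x xs) \<le> V x"
proof -
  have "\<forall>xs\<in>X. length xs \<le> Max (length ` X)" using assms by auto
  then show ?thesis using time_bound[OF c V drift] assms by blast
qed

definition "h x = (SUP X\<in>{X. finite X \<and> X \<subseteq> Tl}. sum (pr x) X)"

lemma h_bdd: "1 \<le> x \<Longrightarrow> bdd_above ((\<lambda>X. sum (pr x) X) ` {X. finite X \<and> X \<subseteq> Tl})"
  using mass' by (auto intro!: bdd_aboveI[of _ 1])

lemma h_upper: "1 \<le> x \<Longrightarrow> finite X \<Longrightarrow> X \<subseteq> Tl \<Longrightarrow> sum (pr x) X \<le> h x"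
  unfolding h_def by (rule cSUP_upper[OF _ h_bdd]) auto

lemma h_le1: "1 \<le> x \<Longrightarrow> h x \<le> 1"
  unfolding h_def by (rule cSUP_least) (auto simp: mass')

lemma h_nn: "1 \<le> x \<Longrightarrow> 0 \<le> h x"
  using h_upper[of x "{}"] by simp

lemma h_approx: assumes "1 \<le> x" "0 < e"
  shows "\<exists>X. finite X \<and> X \<subseteq> Tl \<and> h x - e < sum (pr x) X"
proof -
  have "h x - e < h x" using assms by simp
  have ne: "{X. finite X \<and> X \<subseteq> Tl} \<noteq> {}" by auto
  from less_cSUP_iff[OF ne h_bdd[OF assms(1)], of "h x - e"] \<open>h x - e < h x\<close>
  show ?thesis by (auto simp: h_def)
qed

lemma first_step: assumes x: "1 \<le> x"
  shows "P x i + (\<Sum>y\<in>{1..x+1}-{i}. P x y * h y) \<le> h x"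
proof (rule field_le_epsilon)
  fix e :: real assume e: "0 < e"
  define Z where "Z = {1..x+1}-{i}"
  have Z: "finite Z" "Z \<subseteq> T" by (auto simp: Z_def T_def)
  have "\<forall>y\<in>Z. \<exists>X. finite X \<and> X \<subseteq> Tl \<and> h y - e < sum (pr y) X"
    using h_approx e Z T_ge1 by blast
  then obtain F where F: "\<And>y. y \<in> Z \<Longrightarrow> finite (F y) \<and> F y \<subseteq> Tl \<and> h y - e < sum (pr y) (F y)"
    by metis
  define X where "X = insert [] (\<Union>y\<in>Z. Cons y ` F y)"
  have Xf: "finite X" using F Z by (auto simp: X_def)
  have XT: "X \<subseteq> Tl"
  proof
    fix xs assume "xs \<in> X"
    then consider "xs = []" | y ys where "y \<in> Z" "ys \<in> F y" "xs = y#ys" by (auto simp: X_def)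
    then show "xs \<in> Tl"
    proof cases
      case 1 then show ?thesis by (simp add: Tl_def)
    next
      case 2 then have "ys \<in> Tl" using F by blast
      then show ?thesis using 2 Z by (auto simp: Tl_def)
    qed
  qed
  have "sum (pr x) X = P x i + (\<Sum>y\<in>Z. sum (pr x) (Cons y ` F y))"
    unfolding X_def
    by (subst sum.insert) (use F Z in \<open>auto intro!: sum.UNION_disjoint\<close>)
  also have "\<dots> = P x i + (\<Sum>y\<in>Z. P x y * sum (pr y) (F y))"
    by (simp add: sum.reindex sum_distrib_left)
  also have "\<dots> \<ge> P x i + (\<Sum>y\<in>Z. P x y * (h y - e))"
    using F Pnn[OF x] by (intro add_left_mono sum_mono mult_left_mono) (auto intro: less_imp_le)
  finally have 1: "P x i + (\<Sum>y\<in>Z. P x y * h y) - e * (\<Sum>y\<in>Z. P x y) \<le> sum (pr x) X"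
    by (simp add: algebra_simps sum_subtractf sum_distrib_left)
  have "e * (\<Sum>y\<in>Z. P x y) \<le> e" using sumP_le1[OF x Z(1)] e by simp
  then have "P x i + (\<Sum>y\<in>Z. P x y * h y) \<le> sum (pr x) X + e" using 1 by simp
  also have "\<dots> \<le> h x + e" using h_upper[OF x Xf XT] by simp
  finally show "P x i + (\<Sum>y\<in>{1..x+1}-{i}. P x y * h y) \<le> h x + e" by (simp add: Z_def)
qed

lemma recurrent:
  assumes c: "\<And>x. x \<in> T \<Longrightarrow> 0 < c x" and V: "\<And>y. y \<in> T \<Longrightarrow> 0 \<le> V y"
    and drift: "\<And>x. x \<in> T \<Longrightarrow> c x + (\<Sum>y\<in>{1..x+1}-{i}. P x y * V y) \<le> V x"
    and fin: "\<And>K. finite {x\<in>T. V x \<le> K}"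
  shows "h i = 1"
proof -
  define g where "g x = 1 - h x" for x
  have g01: "0 \<le> g x" "g x \<le> 1" if "x \<in> T" for x
    using h_le1 h_nn T_ge1 that by (auto simp: g_def)
  have harm: "g x \<le> (\<Sum>y\<in>{1..x+1}-{i}. P x y * g y)" if x: "1 \<le> x" for x
  proof -
    have "(\<Sum>y\<in>{1..x+1}-{i}. P x y * g y) = (\<Sum>y\<in>{1..x+1}-{i}. P x y) - (\<Sum>y\<in>{1..x+1}-{i}. P x y * h y)"
      by (simp add: g_def algebra_simps sum_subtractf)
    also have "\<dots> = 1 - P x i - (\<Sum>y\<in>{1..x+1}-{i}. P x y * h y)" using sumP_minus[OF x] by simp
    also have "\<dots> \<ge> g x" using first_step[OF x] by (simp add: g_def)
    finally show ?thesis .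
  qed
  have gT: "g x1 = 0" if x1T: "x1 \<in> T" for x1
  proof (rule ccontr)
    assume "g x1 \<noteq> 0"
    then have gx1: "0 < g x1" using g01[OF x1T] by simp
    define e where "e = g x1 / (V x1 + 1)"
    have e: "0 < e" using gx1 V[OF x1T] by (simp add: e_def)
    define psi where "psi x = g x - e * V x" for x
    have "e * V x1 < g x1"
    proof -
      have "e * V x1 = g x1 * (V x1 / (V x1 + 1))" by (simp add: e_def)
      also have "\<dots> < g x1 * 1" using gx1 V[OF x1T] by (intro mult_strict_left_mono) auto
      finally show ?thesis by simp
    qed
    then have psi1: "0 < psi x1" by (simp add: psi_def)
    define F where "F = {x\<in>T. V x \<le> 1/e}"
    have Ff: "finite F" using fin by (simp add: F_def)
    have x1F: "x1 \<in> F"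
    proof -
      have "e * V x1 < 1" using \<open>e * V x1 < g x1\<close> g01[OF x1T] by simp
      then have "V x1 \<le> 1/e" using e by (simp add: field_simps)
      then show ?thesis using x1T by (simp add: F_def)
    qed
    define m where "m = Max (psi ` F)"
    have "m \<in> psi ` F" unfolding m_def using Ff x1F by (intro Max_in) auto
    then obtain x0 where x0F: "x0 \<in> F" and m: "m = psi x0" by auto
    have mF: "psi y \<le> m" if "y \<in> F" for y unfolding m_def using Ff that by simp
    have m0: "0 < m" using mF[OF x1F] psi1 by simp
    have mT: "psi y \<le> m" if y: "y \<in> T" for y
    proof (cases "y \<in> F")
      case True then show ?thesis using mF by simp
    next
      case False
      then have "1/e < V y" using y by (simp add: F_def)
      then have "1 < e * V y" using e by (simp add: field_simps)
      then show ?thesis using g01[OF y] m0 by (simp add: psi_def)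
    qed
    have x0T: "x0 \<in> T" using x0F by (simp add: F_def)
    note x0 = T_ge1[OF x0T]
    define Z where "Z = {1..x0+1}-{i}"
    have ZT: "Z \<subseteq> T" by (auto simp: Z_def T_def)
    have "g x0 \<le> (\<Sum>y\<in>Z. P x0 y * g y)" using harm[OF x0] by (simp add: Z_def)
    also have "\<dots> \<le> (\<Sum>y\<in>Z. P x0 y * (m + e * V y))"
    proof (intro sum_mono mult_left_mono)
      fix y assume "y \<in> Z"
      then have "y \<in> T" using ZT by auto
      then show "g y \<le> m + e * V y" using mT[of y] by (simp add: psi_def)
      show "0 \<le> P x0 y" using Pnn[OF x0] .
    qed
    also have "\<dots> = m * (\<Sum>y\<in>Z. P x0 y) + e * (\<Sum>y\<in>Z. P x0 y * V y)"
      by (simp add: algebra_simps sum.distrib sum_distrib_left)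
    also have "\<dots> \<le> m * 1 + e * (V x0 - c x0)"
    proof (intro add_mono mult_left_mono)
      show "(\<Sum>y\<in>Z. P x0 y) \<le> 1" using sumP_le1[OF x0] by (simp add: Z_def)
      show "(\<Sum>y\<in>Z. P x0 y * V y) \<le> V x0 - c x0" using drift[OF x0T] by (simp add: Z_def)
    qed (use m0 e in auto)
    also have "\<dots> = g x0 - e * c x0" using m by (simp add: psi_def algebra_simps)
    finally have "e * c x0 \<le> 0" by simp
    then show False using mult_pos_pos[OF e c[OF x0T]] by simp
  qed
  have "P i i + (\<Sum>y\<in>{1..i+1}-{i}. P i y * h y) \<le> h i" using first_step[OF i1] .
  moreover have "(\<Sum>y\<in>{1..i+1}-{i}. P i y * h y) = (\<Sum>y\<in>{1..i+1}-{i}. P i y)"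
    by (intro sum.cong refl) (use gT in \<open>auto simp: g_def T_def\<close>)
  ultimately have "1 \<le> h i" using sumP_minus[OF i1] by simp
  then show ?thesis using h_le1[OF i1] by simp
qed

end

lemma binom_one: "(\<Sum>m\<le>n. real (n choose m) * p^m * (1-p)^(n-m)) = 1"
  using binomial_ring[of p "1-p" n] by simp

lemma binom_mean: "(\<Sum>m\<le>n. real (n choose m) * p^m * (1-p)^(n-m) * m) = n * p"
proof (cases n)
  case 0 then show ?thesis by simp
next
  case (Suc n')
  have "(\<Sum>m\<le>Suc n'. real (Suc n' choose m) * p^m * (1-p)^(Suc n'-m) * m)
     = (\<Sum>m\<le>n'. real (Suc n' choose Suc m) * p^Suc m * (1-p)^(Suc n'-Suc m) * Suc m)"
    by (subst sum.atMost_Suc_shift) simp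
  also have "\<dots> = (\<Sum>m\<le>n'. real (Suc n') * p * (real (n' choose m) * p^m * (1-p)^(n'-m)))"
  proof (intro sum.cong refl)
    fix m
    have "real (Suc n' choose Suc m) * real (Suc m) = real (Suc n') * real (n' choose m)"
      using Suc_times_binomial[of m n'] by (metis mult.commute of_nat_mult)
    then have eq: "real (Suc n' choose Suc m) * real (Suc m) = real (Suc n') * real (n' choose m)" .
    have "real (Suc n' choose Suc m) * p^Suc m * (1-p)^(Suc n'-Suc m) * real (Suc m)
       = (real (Suc n' choose Suc m) * real (Suc m)) * (p * (p^m * (1-p)^(n'-m)))"
      by (simp only: power_Suc diff_Suc_Suc mult_ac)
    also have "\<dots> = (real (Suc n') * real (n' choose m)) * (p * (p^m * (1-p)^(n'-m)))"
      by (simp only: eq)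
    also have "\<dots> = real (Suc n') * p * (real (n' choose m) * p^m * (1-p)^(n'-m))"
      by (simp only: mult_ac)
    finally show "real (Suc n' choose Suc m) * p^Suc m * (1-p)^(Suc n'-Suc m) * Suc m
      = real (Suc n') * p * (real (n' choose m) * p^m * (1-p)^(n'-m))" .
  qed
  also have "\<dots> = real (Suc n') * p" using binom_one[of n' p] by (simp add: sum_distrib_left[symmetric])
  finally show ?thesis using Suc by simp
qed

definition w :: "real \<Rightarrow> nat \<Rightarrow> nat \<Rightarrow> real" where
  "w p x k = real ((x - 1) choose (k - 1)) * p ^ k * (1 - p) ^ (x - k)"

lemma w_sum: assumes "1 \<le> x" shows "(\<Sum>k\<in>{1..<x}. w p x k) = p - p^x"
proof -
  obtain n where x: "x = Suc n" using assms by (cases x) auto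
  have "(\<Sum>k\<in>{1..<x}. w p x k) = (\<Sum>m\<in>{0..<n}. w p x (Suc m))"
    unfolding x using sum.shift_bounds_Suc_ivl[of "w p (Suc n)" 0 n] by simp
  also have "\<dots> = p * (\<Sum>m<n. real (n choose m) * p^m * (1-p)^(n-m))"
    unfolding sum_distrib_left atLeast0LessThan
    by (intro sum.cong refl) (simp add: x w_def mult_ac)
  also have "(\<Sum>m<n. real (n choose m) * p^m * (1-p)^(n-m)) = 1 - p^n"
    using binom_one[of n p] by (simp add: lessThan_Suc_atMost[symmetric])
  finally show ?thesis by (simp add: x algebra_simps)
qed

lemma w_nn: "0 \<le> p \<Longrightarrow> p \<le> 1 \<Longrightarrow> 0 \<le> w p x k"
  by (simp add: w_def)

lemma w_mean: assumes "1 \<le> x" "0 \<le> p" "p \<le> 1"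
  shows "(\<Sum>k\<in>{1..<x}. w p x k * k) \<le> p * ((x - 1) * p + 1)"
proof -
  obtain n where x: "x = Suc n" using assms by (cases x) auto
  have "(\<Sum>k\<in>{1..<x}. w p x k * k) = (\<Sum>m\<in>{0..<n}. w p x (Suc m) * Suc m)"
    unfolding x using sum.shift_bounds_Suc_ivl[of "\<lambda>k. w p (Suc n) k * k" 0 n] by simp
  also have "\<dots> = p * (\<Sum>m<n. real (n choose m) * p^m * (1-p)^(n-m) * (m + 1))"
    unfolding sum_distrib_left atLeast0LessThan
    by (intro sum.cong refl) (simp add: x w_def mult_ac)
  also have "\<dots> \<le> p * (\<Sum>m\<le>n. real (n choose m) * p^m * (1-p)^(n-m) * (m + 1))"
    using assms by (intro mult_left_mono sum_mono2) auto
  also have "(\<Sum>m\<le>n. real (n choose m) * p^m * (1-p)^(n-m) * (m + 1)) = n * p + 1"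
    using binom_one[of n p] binom_mean[of n p] by (simp add: algebra_simps sum.distrib)
  finally show ?thesis by (simp add: x)
qed

locale pp =
  fixes p :: real
  assumes p0: "0 < p" and pe: "p < exp (-1)"
begin

lemma p_half: "p \<le> 1/2"
proof -
  have "2 \<le> exp (1::real)" using exp_ge_add_one_self[of 1] by simp
  then have "exp (-1::real) \<le> 1/2" by (simp add: exp_minus field_simps)
  then show ?thesis using pe by simp
qed

lemma p1: "p < 1" using p_half by simp

lemma lnp: "ln p < -1"
proof -
  have "ln p < ln (exp (-1))" using p0 pe by (subst ln_less_cancel_iff) auto
  then show ?thesis by simp
qed

abbreviation "Q \<equiv> Qbar p"
definition "q x = (2 + real x) * p - p ^ x"

lemma Qd: "1 \<le> x \<Longrightarrow> Q x x = - q x"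
  by (simp add: Qbar_def q_def)

lemma Qlow: "1 \<le> k \<Longrightarrow> k < x \<Longrightarrow> Q x k = w p x k"
  by (simp add: Qbar_def w_def)

lemma Qup: "1 \<le> x \<Longrightarrow> Q x (x+1) = real (x+1) * p"
proof -
  assume "1 \<le> x"
  moreover have "\<not> x + 1 \<le> x - 1" by simp
  ultimately show ?thesis unfolding Qbar_def by simp
qed

lemma Qout: "y \<notin> {1..x+1} \<Longrightarrow> Q x y = 0"
  by (auto simp: Qbar_def)

lemma pow_le_p: "1 \<le> x \<Longrightarrow> p ^ x \<le> p"
  using power_decreasing[of 1 x p] p0 p1 by simp

lemma q_pos: "1 \<le> x \<Longrightarrow> 0 < q x"
  using pow_le_p[of x] p0 by (simp add: q_def algebra_simps) (smt (verit) mult_nonneg_nonneg of_nat_0_le_iff)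

lemma Qnn: "y \<noteq> x \<Longrightarrow> 0 \<le> Q x y"
  using p0 p1 by (auto simp: Qbar_def)

lemma Qsum_f: assumes "1 \<le> x"
  shows "(\<Sum>y\<in>{1..x+1}-{x}. Q x y * f y) = real (x+1) * p * f (x+1) + (\<Sum>k\<in>{1..<x}. w p x k * f k)"
proof -
  have "{1..x+1}-{x} = insert (x+1) {1..<x}" using assms by auto
  then have "(\<Sum>y\<in>{1..x+1}-{x}. Q x y * f y) = Q x (x+1) * f (x+1) + (\<Sum>k\<in>{1..<x}. Q x k * f k)"
    by simp
  also have "(\<Sum>k\<in>{1..<x}. Q x k * f k) = (\<Sum>k\<in>{1..<x}. w p x k * f k)"
    by (intro sum.cong refl) (simp add: Qlow)
  finally show ?thesis using Qup[OF assms] by simp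
qed

lemma q_eq: "1 \<le> x \<Longrightarrow> q x = real (x+1) * p + (\<Sum>k\<in>{1..<x}. w p x k)"
  using w_sum[of x p] by (simp add: q_def algebra_simps)

abbreviation "P \<equiv> jump_prob Q"

lemma P_eq: "1 \<le> x \<Longrightarrow> P x y = (if y = x then 0 else Q x y / q x)"
  using q_pos[of x] Qd[of x] by (simp add: jump_prob_def)

lemma Psum_f: assumes x: "1 \<le> x"
  shows "(\<Sum>y\<in>{1..x+1}. P x y * f y) = (real (x+1) * p * f (x+1) + (\<Sum>k\<in>{1..<x}. w p x k * f k)) / q x"
proof -
  have "(\<Sum>y\<in>{1..x+1}. P x y * f y) = P x x * f x + (\<Sum>y\<in>{1..x+1}-{x}. P x y * f y)"
    using x by (subst sum.remove[of _ x]) auto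
  also have "\<dots> = (\<Sum>y\<in>{1..x+1}-{x}. Q x y * f y) / q x"
    using x by (simp add: P_eq sum_divide_distrib)
  finally show ?thesis using Qsum_f[OF x] by simp
qed

lemma chn: "1 \<le> i \<Longrightarrow> chn P i"
proof
  fix x y :: nat assume x: "1 \<le> x"
  show "0 \<le> P x y" using P_eq[OF x] Qnn q_pos[OF x] by auto
  show "y \<notin> {1..x+1} \<Longrightarrow> P x y = 0" using P_eq[OF x] Qout by auto
next
  fix x :: nat assume x: "1 \<le> x"
  show "(\<Sum>y\<in>{1..x+1}. P x y) = 1"
    using Psum_f[OF x, of "\<lambda>_. 1"] q_eq[OF x] q_pos[OF x] by simp
qed

end

locale ppi = pp +
  fixes i :: nat
  assumes i1: "1 \<le> i"
begin

definition "kap = - p * (1 + ln p)"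
definition "A = 2 / kap"
definition "L = (1 + real i * p * A) / p"
definition "Nr = max (2 * (2 - ln p) / kap) (exp (ln (real i) + L * real i / A + 1 - ln p))"
definition "N = nat \<lceil>Nr\<rceil> + i + 1"
definition "B = (1 + real N * p * A + p * L * real i) / (p ^ i * (1 - p) ^ N)"
definition "U y = A * ln (real y) + L * real (i - y) + B"
definition "U0 y = (if y = i then 0 else U y)"
definition "V y = (if y = i then (1 + real (i+1) * p * U (i+1) + (\<Sum>k\<in>{1..<i}. w p i k * U k)) / q i else U y)"

lemma kap_pos: "0 < kap"
proof -
  have "0 < - (1 + ln p)" using lnp by simp
  then have "0 < p * (- (1 + ln p))" using p0 by simp
  then show ?thesis by (simp only: kap_def mult_minus_left mult_minus_right)
qed

lemma A_pos: "0 < A" using kap_pos by (simp add: A_def)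

lemma L_pos: "0 < L"
proof -
  have "0 \<le> real i * p * A" using A_pos p0 by simp
  then have "0 < 1 + real i * p * A" by simp
  then show ?thesis using p0 by (simp add: L_def)
qed

lemma pL: "p * L = 1 + real i * p * A" using p0 by (simp add: L_def)

lemma wlow_pos: "0 < p ^ i * (1 - p) ^ N" using p0 p1 by simp

lemma B_pos: "0 < B"
proof -
  have "0 \<le> real N * p * A" "0 \<le> p * L * real i" using A_pos L_pos p0 by simp_all
  then have "0 < 1 + real N * p * A + p * L * real i" by simp
  then show ?thesis using wlow_pos by (simp add: B_def)
qed

lemma U_ge: "1 \<le> y \<Longrightarrow> B \<le> U y"
  using A_pos L_pos by (simp add: U_def)

lemma U_nn: "1 \<le> y \<Longrightarrow> 0 \<le> U y"
  using U_ge[of y] B_pos by simp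

lemma U0_le: "1 \<le> y \<Longrightarrow> U0 y \<le> U y"
  using U_nn by (simp add: U0_def)

lemma V_nn: "1 \<le> y \<Longrightarrow> y \<noteq> i \<Longrightarrow> 0 \<le> V y"
  using U_nn by (simp add: V_def)

lemma sum_V: assumes x: "1 \<le> x"
  shows "(\<Sum>y\<in>{1..x+1}-{i}. P x y * V y) = (real (x+1) * p * U0 (x+1) + (\<Sum>k\<in>{1..<x}. w p x k * U0 k)) / q x"
proof -
  have "(\<Sum>y\<in>{1..x+1}-{i}. P x y * V y) = (\<Sum>y\<in>{1..x+1}-{i}. P x y * U0 y)"
    by (intro sum.cong refl) (simp add: V_def U0_def)
  also have "\<dots> = (\<Sum>y\<in>{1..x+1}. P x y * U0 y)"
    by (rule sum.mono_neutral_left) (auto simp: U0_def)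
  finally show ?thesis using Psum_f[OF x] by simp
qed

lemma reduce:
  assumes x: "1 \<le> x" and xi: "x \<noteq> i"
    and H: "1 + real (x+1) * p * (U0 (x+1) - U x) + (\<Sum>k\<in>{1..<x}. w p x k * (U0 k - U x)) \<le> 0"
  shows "1 / q x + (\<Sum>y\<in>{1..x+1}-{i}. P x y * V y) \<le> V x"
proof -
  have qx: "0 < q x" using q_pos[OF x] .
  have "1 + real (x+1) * p * U0 (x+1) + (\<Sum>k\<in>{1..<x}. w p x k * U0 k) 
     \<le> real (x+1) * p * U x + (\<Sum>k\<in>{1..<x}. w p x k) * U x"
  proof -
    have e: "(\<Sum>k\<in>{1..<x}. w p x k) * U x = (\<Sum>k\<in>{1..<x}. w p x k * U x)"
      by (simp add: sum_distrib_right)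
    show ?thesis using H unfolding e by (simp add: algebra_simps sum_subtractf)
  qed
  also have "\<dots> = q x * U x" using q_eq[OF x] by (simp add: algebra_simps)
  finally have "(1 + real (x+1) * p * U0 (x+1) + (\<Sum>k\<in>{1..<x}. w p x k * U0 k)) / q x \<le> U x"
    using qx by (simp add: divide_le_eq mult.commute)
  then show ?thesis using sum_V[OF x] xi by (simp add: V_def add_divide_distrib)
qed

lemma drift_i: "1 / q i + (\<Sum>y\<in>{1..i+1}-{i}. P i y * V y) \<le> V i"
proof -
  have "(\<Sum>k\<in>{1..<i}. w p i k * U0 k) = (\<Sum>k\<in>{1..<i}. w p i k * U k)"
    by (intro sum.cong refl) (simp add: U0_def)
  moreover have "U0 (i+1) = U (i+1)" by (simp add: U0_def)
  ultimately show ?thesis using sum_V[OF i1] by (simp add: V_def add_divide_distrib)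
qed

lemma ln_step: "1 \<le> x \<Longrightarrow> ln (real (x+1)) - ln (real x) \<le> 1 / real x"
proof -
  assume x: "1 \<le> x"
  have "ln (real (x+1) / real x) \<le> real (x+1) / real x - 1" using x by (intro ln_le_minus_one) auto
  then show ?thesis using x by (simp add: ln_div field_simps)
qed

lemma w_sum_le: "1 \<le> x \<Longrightarrow> (\<Sum>k\<in>{1..<x}. w p x k) \<le> p"
  using w_sum[of x p] p0 by simp

lemma case_low: assumes x: "1 \<le> x" and xi: "x < i"
  shows "1 + real (x+1) * p * (U0 (x+1) - U x) + (\<Sum>k\<in>{1..<x}. w p x k * (U0 k - U x)) \<le> 0"
proof -
  have h1: "U0 (x+1) - U x \<le> A - L"
  proof -
    have "real (i - (x+1)) = real (i - x) - 1" using xi by simp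
    then have "U (x+1) - U x = A * (ln (real (x+1)) - ln (real x)) - L"
      by (simp add: U_def algebra_simps)
    also have "\<dots> \<le> A * 1 - L"
    proof -
      have "ln (real (x+1)) - ln (real x) \<le> 1"
        using ln_step[OF x] x by (smt (verit) divide_le_eq_1 of_nat_1 of_nat_mono)
      then show ?thesis using A_pos by (simp add: mult_left_le)
    qed
    finally show ?thesis using U0_le[of "x+1"] by simp
  qed
  have h2: "U0 k - U x \<le> L * (real x - 1)" if k: "k \<in> {1..<x}" for k
  proof -
    have ki: "k \<noteq> i" using k xi by simp
    have e: "real (i - k) = real (i - x) + (real x - real k)" using k xi by simp
    have "U k - U x = A * (ln (real k) - ln (real x)) + L * (real x - real k)"
      unfolding U_def e by (simp add: algebra_simps)
    also have "\<dots> \<le> 0 + L * (real x - 1)"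
    proof (intro add_mono)
      have "ln (real k) \<le> ln (real x)" using k by simp
      then show "A * (ln (real k) - ln (real x)) \<le> 0" using A_pos by (simp add: mult_le_0_iff)
      show "L * (real x - real k) \<le> L * (real x - 1)" using k L_pos by simp
    qed
    finally show ?thesis using ki by (simp add: U0_def)
  qed
  have "(\<Sum>k\<in>{1..<x}. w p x k * (U0 k - U x)) \<le> (\<Sum>k\<in>{1..<x}. w p x k * (L * (real x - 1)))"
    using h2 p0 p1 by (intro sum_mono mult_left_mono) (auto simp: w_nn)
  also have "\<dots> = (\<Sum>k\<in>{1..<x}. w p x k) * (L * (real x - 1))" by (simp add: sum_distrib_right)
  also have "\<dots> \<le> p * (L * (real x - 1))"
    using w_sum_le[OF x] L_pos x by (intro mult_right_mono) auto
  finally have s: "(\<Sum>k\<in>{1..<x}. w p x k * (U0 k - U x)) \<le> p * L * (real x - 1)" by simp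
  have t: "real (x+1) * p * (U0 (x+1) - U x) \<le> real (x+1) * p * (A - L)"
    using h1 p0 by (intro mult_left_mono) auto
  have "real (x+1) * p * A \<le> real i * p * A" using xi p0 A_pos by (intro mult_right_mono) auto
  then have "1 + real (x+1) * p * (A - L) + p * L * (real x - 1) \<le> 1 + real i * p * A - 2 * (p * L)"
    by (simp add: algebra_simps)
  also have "\<dots> < 0"
  proof -
    define a where "a = real i * p * A"
    have "0 \<le> a" using A_pos p0 by (simp add: a_def)
    then have "1 + a - 2 * (1 + a) < 0" by simp
    then show ?thesis unfolding pL a_def .
  qed
  finally have c: "1 + real (x+1) * p * (A - L) + p * L * (real x - 1) < 0" .
  show ?thesis using s t c by linarith
qed

lemma N_gt: "N \<le> x \<Longrightarrow> Nr < real x \<and> i < x"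
proof -
  assume "N \<le> x"
  then have "real (nat \<lceil>Nr\<rceil>) + 1 \<le> real x" "i < x" by (auto simp: N_def)
  moreover have "Nr \<le> real (nat \<lceil>Nr\<rceil>)" by linarith
  ultimately show ?thesis by simp
qed

lemma case_mid: assumes x: "1 \<le> x" and xi: "i < x" and xN: "x < N"
  shows "1 + real (x+1) * p * (U0 (x+1) - U x) + (\<Sum>k\<in>{1..<x}. w p x k * (U0 k - U x)) \<le> 0"
proof -
  have h1: "U0 (x+1) - U x \<le> A"
  proof -
    have "U0 (x+1) - U x = A * (ln (real (x+1)) - ln (real x))" using xi by (simp add: U_def U0_def algebra_simps)
    also have "\<dots> \<le> A * 1"
    proof -
      have "ln (real (x+1)) - ln (real x) \<le> 1"
        using ln_step[OF x] x by (smt (verit) divide_le_eq_1 of_nat_1 of_nat_mono)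
      then show ?thesis using A_pos by (simp add: mult_left_le)
    qed
    finally show ?thesis by simp
  qed
  have h2: "U0 k - U x \<le> L * real i - (if k = i then B else 0)" if k: "k \<in> {1..<x}" for k
  proof (cases "k = i")
    case True
    have "0 \<le> L * real i" using L_pos by simp
    then show ?thesis using U_ge[OF x] True by (simp add: U0_def)
  next
    case False
    have "U k - U x = A * (ln (real k) - ln (real x)) + L * real (i - k)" using xi by (simp add: U_def algebra_simps)
    also have "\<dots> \<le> 0 + L * real i"
    proof (intro add_mono)
      have "ln (real k) \<le> ln (real x)" using k by simp
      then show "A * (ln (real k) - ln (real x)) \<le> 0" using A_pos by (simp add: mult_le_0_iff)
      show "L * real (i - k) \<le> L * real i" using L_pos by simp
    qed
    finally show ?thesis using False by (simp add: U0_def)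
  qed
  have "(\<Sum>k\<in>{1..<x}. w p x k * (U0 k - U x)) \<le> (\<Sum>k\<in>{1..<x}. w p x k * (L * real i - (if k = i then B else 0)))"
    using h2 p0 p1 by (intro sum_mono mult_left_mono) (auto simp: w_nn)
  also have "\<dots> = (\<Sum>k\<in>{1..<x}. w p x k) * (L * real i) - w p x i * B"
  proof -
    have "(\<Sum>k\<in>{1..<x}. w p x k * (L * real i - (if k = i then B else 0))) = 
      (\<Sum>k\<in>{1..<x}. w p x k * (L * real i)) - (\<Sum>k\<in>{1..<x}. (if k = i then w p x k * B else 0))"
    proof -
      have "(\<Sum>k\<in>{1..<x}. w p x k * (L * real i - (if k = i then B else 0))) = 
        (\<Sum>k\<in>{1..<x}. w p x k * (L * real i) - (if k = i then w p x k * B else 0))"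
        by (intro sum.cong refl) (simp add: right_diff_distrib)
      then show ?thesis by (simp only: sum_subtractf)
    qed
    also have "(\<Sum>k\<in>{1..<x}. (if k = i then w p x k * B else 0)) = w p x i * B"
      using xi i1 by (simp add: sum.delta)
    finally show ?thesis by (simp add: sum_distrib_right)
  qed
  also have "\<dots> \<le> p * (L * real i) - p ^ i * (1 - p) ^ N * B"
  proof (intro diff_mono mult_right_mono)
    show "(\<Sum>k\<in>{1..<x}. w p x k) \<le> p" using w_sum_le[OF x] .
    show "0 \<le> L * real i" using L_pos by simp
    show "0 \<le> B" using B_pos by simp
    have "0 < (x - 1) choose (i - 1)" using xi by (simp add: zero_less_binomial_iff)
    then have c0: "1 \<le> (x - 1) choose (i - 1)" by linarith
    then have c: "1 \<le> real ((x - 1) choose (i - 1))" by (metis of_nat_1 of_nat_mono)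
    have d: "(1 - p) ^ N \<le> (1 - p) ^ (x - i)" using xN p0 p1 by (intro power_decreasing) auto
    have "p ^ i * (1 - p) ^ N \<le> p ^ i * (1 - p) ^ (x - i)" using d p0 by simp
    also have "\<dots> \<le> real ((x - 1) choose (i - 1)) * (p ^ i * (1 - p) ^ (x - i))"
    proof -
      have "0 \<le> p ^ i * (1 - p) ^ (x - i)" using p0 p1 by simp
      then have "1 * (p ^ i * (1 - p) ^ (x - i)) \<le> real ((x - 1) choose (i - 1)) * (p ^ i * (1 - p) ^ (x - i))"
        using c by (intro mult_right_mono) auto
      then show ?thesis by simp
    qed
    finally show "p ^ i * (1 - p) ^ N \<le> w p x i" by (simp add: w_def mult_ac)
  qed
  finally have s: "(\<Sum>k\<in>{1..<x}. w p x k * (U0 k - U x)) \<le> p * L * real i - p ^ i * (1 - p) ^ N * B" by simp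
  have t: "real (x+1) * p * (U0 (x+1) - U x) \<le> real N * p * A"
  proof -
    have "real (x+1) * p * (U0 (x+1) - U x) \<le> real (x+1) * p * A" using h1 p0 by (intro mult_left_mono) auto
    also have "\<dots> \<le> real N * p * A" using xN p0 A_pos by (intro mult_right_mono) auto
    finally show ?thesis .
  qed
  have "p ^ i * (1 - p) ^ N * B = 1 + real N * p * A + p * L * real i"
  proof -
    have ne: "p ^ i * (1 - p) ^ N \<noteq> 0" by (metis wlow_pos order_less_irrefl)
    show ?thesis by (simp only: B_def times_divide_eq_right nonzero_mult_div_cancel_left[OF ne])
  qed
  then show ?thesis using s t by simp
qed

lemma N_props: assumes "N \<le> x"
  shows "i < x" "(2 - ln p) / real x \<le> kap / 2" "ln (real i) + L * real i / A + 1 - ln p \<le> ln (real x)"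
proof -
  have Nx: "Nr < real x" "i < x" using N_gt[OF assms] by auto
  then show "i < x" by simp
  have x0: "0 < real x" using Nx(2) by simp
  have "2 * (2 - ln p) / kap < real x" using Nx(1) by (simp add: Nr_def)
  then have "2 * (2 - ln p) < real x * kap" using kap_pos by (simp add: pos_divide_less_eq)
  then show "(2 - ln p) / real x \<le> kap / 2" using x0 by (simp add: divide_le_eq field_simps)
  have "exp (ln (real i) + L * real i / A + 1 - ln p) < real x" using Nx(1) by (simp add: Nr_def)
  then have "ln (exp (ln (real i) + L * real i / A + 1 - ln p)) < ln (real x)"
    using x0 by (subst ln_less_cancel_iff) auto
  then show "ln (real i) + L * real i / A + 1 - ln p \<le> ln (real x)" by simp
qed

lemma pw: assumes xN: "N \<le> x" and k: "1 \<le> k" "k < x"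
  shows "U k - U x \<le> A * (ln p + real k / (p * real x) - 1)"
proof -
  note NP = N_props[OF xN]
  have x0: "0 < real x" using k by simp
  have k0: "0 < real k" using k by simp
  have Ux: "U x = A * ln (real x) + B" using NP(1) by (simp add: U_def)
  have "ln (real k / (p * real x)) \<le> real k / (p * real x) - 1"
    using k0 x0 p0 by (intro ln_le_minus_one) simp
  then have t: "ln (real k) - ln (real x) \<le> ln p + real k / (p * real x) - 1"
    using k0 x0 p0 by (simp add: ln_div ln_mult)
  show ?thesis
  proof (cases "i \<le> k")
    case True
    then have "U k - U x = A * (ln (real k) - ln (real x))" using Ux by (simp add: U_def algebra_simps)
    also have "\<dots> \<le> A * (ln p + real k / (p * real x) - 1)" using t A_pos by (intro mult_left_mono) auto
    finally show ?thesis .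
  next
    case False
    have "U k - U x = A * (ln (real k) - ln (real x)) + L * real (i - k)" using Ux by (simp add: U_def algebra_simps)
    also have "\<dots> \<le> A * (ln (real i) - ln (real x)) + L * real i"
    proof (intro add_mono mult_left_mono)
      show "ln (real k) - ln (real x) \<le> ln (real i) - ln (real x)" using False k0 by simp
    qed (use A_pos L_pos in auto)
    also have "\<dots> \<le> A * (ln p - 1)"
    proof -
      have "A * (ln (real i) + L * real i / A + 1 - ln p) \<le> A * ln (real x)"
        using NP(3) A_pos by (intro mult_left_mono) auto
      then show ?thesis using A_pos by (simp add: algebra_simps)
    qed
    also have "\<dots> \<le> A * (ln p + real k / (p * real x) - 1)"
      using A_pos k0 x0 p0 by (intro mult_left_mono) auto
    finally show ?thesis .
  qed
qed

lemma pow_le_inv: assumes "1 \<le> x" shows "p ^ x \<le> 1 / real x"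
proof -
  have "p ^ x \<le> (1/2) ^ x" using p0 p_half by (intro power_mono) auto
  also have "\<dots> = 1 / 2 ^ x" by (simp add: power_one_over)
  also have "\<dots> \<le> 1 / real x"
  proof -
    have "real x < 2 ^ x" using less_exp[of x] by (metis of_nat_less_iff of_nat_numeral of_nat_power)
    then show ?thesis using assms by (intro divide_left_mono) auto
  qed
  finally show ?thesis .
qed

lemma case_high: assumes x: "1 \<le> x" and xN: "N \<le> x"
  shows "1 + real (x+1) * p * (U0 (x+1) - U x) + (\<Sum>k\<in>{1..<x}. w p x k * (U0 k - U x)) \<le> 0"
proof -
  note NP = N_props[OF xN]
  have x0: "0 < real x" using x by simp
  have h1: "U0 (x+1) - U x \<le> A / real x"
  proof -
    have "U0 (x+1) - U x = A * (ln (real (x+1)) - ln (real x))" using NP(1) by (simp add: U_def U0_def algebra_simps)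
    also have "\<dots> \<le> A * (1 / real x)" using ln_step[OF x] A_pos by (intro mult_left_mono) auto
    finally show ?thesis by simp
  qed
  have h2: "U0 k - U x \<le> A * (ln p - 1) + (A / (p * real x)) * real k" if k: "k \<in> {1..<x}" for k
  proof -
    have "U0 k \<le> U k" using U0_le k by simp
    moreover have "U k - U x \<le> A * (ln p + real k / (p * real x) - 1)" using pw[OF xN] k by simp
    ultimately show ?thesis by (simp add: algebra_simps)
  qed
  have "(\<Sum>k\<in>{1..<x}. w p x k * (U0 k - U x)) \<le> (\<Sum>k\<in>{1..<x}. w p x k * (A * (ln p - 1) + (A / (p * real x)) * real k))"
    using h2 p0 p1 by (intro sum_mono mult_left_mono) (auto simp: w_nn)
  also have "\<dots> = A * (ln p - 1) * (\<Sum>k\<in>{1..<x}. w p x k) + (A / (p * real x)) * (\<Sum>k\<in>{1..<x}. w p x k * real k)"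
    by (simp add: distrib_left sum.distrib sum_distrib_left mult_ac)
  also have "\<dots> \<le> A * (ln p - 1) * (p - p ^ x) + (A / (p * real x)) * (p * ((real x - 1) * p + 1))"
  proof -
    have "(\<Sum>k\<in>{1..<x}. w p x k * real k) \<le> p * ((real x - 1) * p + 1)"
      using w_mean[OF x, of p] p0 p1 x by (simp add: of_nat_diff)
    moreover have "0 \<le> A / (p * real x)" using A_pos p0 x0 by simp
    ultimately have m: "(A / (p * real x)) * (\<Sum>k\<in>{1..<x}. w p x k * real k) \<le> (A / (p * real x)) * (p * ((real x - 1) * p + 1))"
      by (intro mult_left_mono)
    show ?thesis unfolding w_sum[OF x, of p] by (rule add_left_mono[OF m])
  qed
  finally have s: "(\<Sum>k\<in>{1..<x}. w p x k * (U0 k - U x)) \<le> A * (ln p - 1) * (p - p ^ x) + (A / (p * real x)) * (p * ((real x - 1) * p + 1))" .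
  have t: "real (x+1) * p * (U0 (x+1) - U x) \<le> real (x+1) * p * (A / real x)"
    using h1 p0 by (intro mult_left_mono) auto
  define E where "E = real (x+1) * p / real x + (ln p - 1) * (p - p ^ x) + ((real x - 1) * p + 1) / real x"
  have e1: "real (x+1) * p * (A / real x) + (A * (ln p - 1) * (p - p ^ x) + (A / (p * real x)) * (p * ((real x - 1) * p + 1))) = A * E"
    using x0 p0 by (simp add: E_def field_simps)
  have e2: "E = - kap + 1 / real x + p ^ x * (1 - ln p)"
    using x0 p0 by (simp add: E_def kap_def field_simps)
  have "p ^ x * (1 - ln p) \<le> (1 / real x) * (1 - ln p)"
    using pow_le_inv[OF x] lnp by (intro mult_right_mono) auto
  then have a: "p ^ x * (1 - ln p) \<le> (1 - ln p) / real x" by simp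
  have b: "(2 - ln p) / real x = (1 - ln p) / real x + 1 / real x" using x0 by (simp add: field_simps)
  have "E \<le> - kap + (2 - ln p) / real x" unfolding e2 using a b by linarith
  also have "\<dots> \<le> - kap / 2" using NP(2) by linarith
  finally have "A * E \<le> A * (- kap / 2)" using A_pos by (intro mult_left_mono) auto
  also have "\<dots> = -1" using kap_pos by (simp add: A_def)
  finally have "A * E \<le> -1" .
  then show ?thesis using s t e1 by linarith
qed

lemma drift_all: assumes x: "1 \<le> x"
  shows "1 / q x + (\<Sum>y\<in>{1..x+1}-{i}. P x y * V y) \<le> V x"
proof (cases "x = i")
  case True then show ?thesis using drift_i by simp
next
  case False
  show ?thesis
  proof (rule reduce[OF x False])
    consider "x < i" | "i < x \<and> x < N" | "N \<le> x" using False by linarith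
    then show "1 + real (x+1) * p * (U0 (x+1) - U x) + (\<Sum>k\<in>{1..<x}. w p x k * (U0 k - U x)) \<le> 0"
      by cases (use case_low[OF x] case_mid[OF x] case_high[OF x] in auto)
  qed
qed

end

sublocale ppi \<subseteq> chn "jump_prob (Qbar p)" i by (rule chn[OF i1])

context ppi begin

lemma fin_sub: "finite {x\<in>T. V x \<le> K}"
proof -
  have "{x\<in>T. V x \<le> K} \<subseteq> {..nat \<lceil>exp (K / A)\<rceil>}"
  proof
    fix x assume x: "x \<in> {x\<in>T. V x \<le> K}"
    then have x1: "1 \<le> x" "x \<noteq> i" by (auto simp: T_def)
    then have "A * ln (real x) \<le> K"
      using x L_pos B_pos by (simp add: V_def U_def) (smt (verit) mult_nonneg_nonneg of_nat_0_le_iff)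
    then have "ln (real x) \<le> K / A" using A_pos by (simp add: field_simps)
    then have "exp (ln (real x)) \<le> exp (K / A)" by simp
    then have "real x \<le> exp (K / A)" using x1 by simp
    then show "x \<in> {..nat \<lceil>exp (K / A)\<rceil>}" by (simp add: le_nat_iff) linarith
  qed
  then show ?thesis using finite_subset by blast
qed

lemma h_i: "h i = 1"
proof (rule recurrent[of "\<lambda>x. 1 / q x" V])
  fix x assume "x \<in> T"
  then have x: "1 \<le> x" "x \<noteq> i" by (auto simp: T_def)
  show "0 < 1 / q x" using q_pos[OF x(1)] by simp
  show "0 \<le> V x" using V_nn x by simp
  show "1 / q x + (\<Sum>y\<in>{1..x+1}-{i}. jump_prob (Qbar p) x y * V y) \<le> V x" using drift_all[OF x(1)] .
next
  fix K show "finite {x\<in>T. V x \<le> K}" by (rule fin_sub)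
qed

lemma tb: "finite X \<Longrightarrow> X \<subseteq> Tl \<Longrightarrow> (\<Sum>xs\<in>X. pr i xs * tm (\<lambda>x. 1 / q x) i xs) \<le> V i"
  by (rule time_bound'[OF _ _ drift_all i1]) (use q_pos V_nn in \<open>auto simp: T_def less_imp_le\<close>)

lemma ep: "1 \<le> x \<Longrightarrow> set xs \<subseteq> T \<Longrightarrow>
  prod_list (map2 (\<lambda>a b. ennreal (jump_prob (Qbar p) a b)) (x#xs) (xs@[i])) = ennreal (pr x xs)"
proof (induction xs arbitrary: x)
  case Nil then show ?case by simp
next
  case (Cons y ys)
  have y: "1 \<le> y" "set ys \<subseteq> T" using Cons.prems by (auto simp: T_def)
  have "prod_list (map2 (\<lambda>a b. ennreal (jump_prob (Qbar p) a b)) (x#y#ys) ((y#ys)@[i]))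
     = ennreal (jump_prob (Qbar p) x y) * prod_list (map2 (\<lambda>a b. ennreal (jump_prob (Qbar p) a b)) (y#ys) (ys@[i]))"
    by simp
  also have "\<dots> = ennreal (jump_prob (Qbar p) x y) * ennreal (pr y ys)" using Cons.IH[OF y] by simp
  also have "\<dots> = ennreal (pr x (y#ys))"
    using Pnn[OF Cons.prems(1)] pr_nn[OF y] by (simp add: ennreal_mult)
  finally show ?case .
qed

lemma et: "1 \<le> x \<Longrightarrow> set xs \<subseteq> T \<Longrightarrow>
  sum_list (map (\<lambda>x. inverse (ennreal (- Qbar p x x))) (x#xs)) = ennreal (tm (\<lambda>x. 1 / q x) x xs)"
proof (induction xs arbitrary: x)
  case Nil
  then show ?case using q_pos[OF Nil.prems(1)] Qd[OF Nil.prems(1)] by (simp add: inverse_ennreal tm_def divide_inverse)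
next
  case (Cons y ys)
  have y: "1 \<le> y" "set ys \<subseteq> T" using Cons.prems by (auto simp: T_def)
  have "sum_list (map (\<lambda>x. inverse (ennreal (- Qbar p x x))) (x#y#ys))
      = inverse (ennreal (- Qbar p x x)) + sum_list (map (\<lambda>x. inverse (ennreal (- Qbar p x x))) (y#ys))"
    by simp
  also have "\<dots> = ennreal (1 / q x) + ennreal (tm (\<lambda>x. 1 / q x) y ys)"
    using Cons.IH[OF y] q_pos[OF Cons.prems(1)] Qd[OF Cons.prems(1)] by (simp add: inverse_ennreal divide_inverse)
  also have "\<dots> = ennreal (tm (\<lambda>x. 1 / q x) x (y#ys))"
  proof -
    have "0 \<le> tm (\<lambda>x. 1 / q x) y ys"
      unfolding tm_def using y q_pos by (intro sum_list_nonneg) (auto simp: T_def less_imp_le)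
    then show ?thesis using q_pos[OF Cons.prems(1)] by (simp add: ennreal_plus[symmetric] del: ennreal_plus)
  qed
  finally show ?case .
qed

lemma exc: "excursions {1..} i = Tl" by (simp add: excursions_def Tl_def T_def)

lemma return_one: "return_prob (Qbar p) {1..} i = 1"
proof -
  have "return_prob (Qbar p) {1..} i = infsum (\<lambda>xs. ennreal (pr i xs)) Tl"
    unfolding return_prob_def exc
    by (intro infsum_cong) (simp add: excursion_prob_def ep[OF i1] Tl_def)
  also have "\<dots> = (SUP F\<in>{F. finite F \<and> F \<subseteq> Tl}. sum (\<lambda>xs. ennreal (pr i xs)) F)"
    by (rule nonneg_infsum_complete) simp
  also have "\<dots> = (SUP F\<in>{F. finite F \<and> F \<subseteq> Tl}. ennreal (sum (pr i) F))"
  proof (intro SUP_cong refl)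
    fix F assume "F \<in> {F. finite F \<and> F \<subseteq> Tl}"
    then show "sum (\<lambda>xs. ennreal (pr i xs)) F = ennreal (sum (pr i) F)"
      using pr_nn[OF i1] by (intro sum_ennreal) (auto simp: Tl_def)
  qed
  also have "\<dots> = 1"
  proof (rule antisym)
    show "(SUP F\<in>{F. finite F \<and> F \<subseteq> Tl}. ennreal (sum (pr i) F)) \<le> 1"
      using mass'[OF i1] by (intro SUP_least) (simp add: ennreal_le_1)
    show "1 \<le> (SUP F\<in>{F. finite F \<and> F \<subseteq> Tl}. ennreal (sum (pr i) F))"
    proof (rule ennreal_le_epsilon)
      fix e :: real assume e: "0 < e"
      obtain X where X: "finite X" "X \<subseteq> Tl" "h i - e < sum (pr i) X" using h_approx[OF i1 e] by blast
      have "ennreal 1 \<le> ennreal (sum (pr i) X + e)" using X(3) h_i by (intro ennreal_leI) simp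
      also have "\<dots> = ennreal (sum (pr i) X) + ennreal e"
        using e sum_nonneg[of X "pr i"] pr_nn[OF i1] X(2) by (subst ennreal_plus) (auto simp: Tl_def)
      also have "\<dots> \<le> (SUP F\<in>{F. finite F \<and> F \<subseteq> Tl}. ennreal (sum (pr i) F)) + ennreal e"
        using X by (intro add_right_mono SUP_upper) auto
      finally show "1 \<le> (SUP F\<in>{F. finite F \<and> F \<subseteq> Tl}. ennreal (sum (pr i) F)) + ennreal e" by simp
    qed
  qed
  finally show ?thesis .
qed

lemma tm_nn: "1 \<le> x \<Longrightarrow> set xs \<subseteq> T \<Longrightarrow> 0 \<le> tm (\<lambda>x. 1 / q x) x xs"
  unfolding tm_def using q_pos by (intro sum_list_nonneg) (auto simp: T_def less_imp_le)

lemma mrt_fin: "mean_return_time (Qbar p) {1..} i < top"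
proof -
  have "mean_return_time (Qbar p) {1..} i = infsum (\<lambda>xs. ennreal (pr i xs * tm (\<lambda>x. 1 / q x) i xs)) Tl"
    unfolding mean_return_time_def return_one exc if_P[OF refl]
  proof (intro infsum_cong)
    fix xs assume "xs \<in> Tl"
    then have xs: "set xs \<subseteq> T" by (simp add: Tl_def)
    show "excursion_prob (Qbar p) i xs * excursion_time (Qbar p) i xs = ennreal (pr i xs * tm (\<lambda>x. 1 / q x) i xs)"
      unfolding excursion_prob_def excursion_time_def ep[OF i1 xs] et[OF i1 xs]
      using pr_nn[OF i1 xs] tm_nn[OF i1 xs] by (simp add: ennreal_mult)
  qed
  also have "\<dots> = (SUP F\<in>{F. finite F \<and> F \<subseteq> Tl}. sum (\<lambda>xs. ennreal (pr i xs * tm (\<lambda>x. 1 / q x) i xs)) F)"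
    by (rule nonneg_infsum_complete) simp
  also have "\<dots> \<le> ennreal (V i)"
  proof (rule SUP_least)
    fix F assume F: "F \<in> {F. finite F \<and> F \<subseteq> Tl}"
    have "sum (\<lambda>xs. ennreal (pr i xs * tm (\<lambda>x. 1 / q x) i xs)) F = ennreal (sum (\<lambda>xs. pr i xs * tm (\<lambda>x. 1 / q x) i xs) F)"
      using F pr_nn[OF i1] tm_nn[OF i1] by (intro sum_ennreal) (auto simp: Tl_def)
    also have "\<dots> \<le> ennreal (V i)" using F tb by (intro ennreal_leI) auto
    finally show "sum (\<lambda>xs. ennreal (pr i xs * tm (\<lambda>x. 1 / q x) i xs)) F \<le> ennreal (V i)" .
  qed
  also have "\<dots> < top" by simp
  finally show ?thesis .
qed

end

theorem corollary7:
  fixes p :: real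
  assumes "0 < p" and "p < exp (-1)"
  shows "positive_recurrent (Qbar p) {1..}"
  unfolding positive_recurrent_def positive_recurrent_state_def
proof
  fix i :: nat assume "i \<in> {1..}"
  then interpret ppi p i using assms by unfold_locales auto
  show "mean_return_time (Qbar p) {1..} i < top" by (rule mrt_fin)
qed

end
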